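(* Let $R$ be a ring with unity and involution $*$, and let $a\in R$. The following statements are equivalent. (1) $a$ is left dual core invertible. (2) $a^2$ is strongly left $(a^*,a)$-invertible. (3) $a^2$ is strongly left $(a^*,1)$-invertible. (4) $a$ is strongly left $(a^*,a)$-invertible.
   Context: $a$ is left dual core invertible if there exists $x\in R$ with $axa=a$, $(xa)^*=xa$ and $x^2a=x$. For $u,b,c\in R$, $u$ is strongly left $(b,c)$-invertible if $b\in Rcub$ and $cub$ is regular (there exists $z$ with $cub\,z\,cub=cub$). *)

theory Defs
  imports Main
begin

definition ring_involution :: "('a::ring_1 \<Rightarrow> 'a) \<Rightarrow> bool" where
  "ring_involution star \<longleftrightarrow>
     (\<forall>x y. star (x + y) = star x + star y) \<and>
     (\<forall>x y. star (x * y) = star y * star x) \<and>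
     (\<forall>x. star (star x) = x)"

definition left_dual_core_invertible :: "('a::ring_1 \<Rightarrow> 'a) \<Rightarrow> 'a \<Rightarrow> bool" where
  "left_dual_core_invertible star a \<longleftrightarrow>
     (\<exists>x. a * x * a = a \<and> star (x * a) = x * a \<and> x ^ 2 * a = x)"

definition regular :: "'a::ring_1 \<Rightarrow> bool" where
  "regular a \<longleftrightarrow> (\<exists>z. a * z * a = a)"

definition strongly_left_bc_invertible :: "'a::ring_1 \<Rightarrow> 'a \<Rightarrow> 'a \<Rightarrow> bool" where
  "strongly_left_bc_invertible u b c \<longleftrightarrow>
     (\<exists>r. b = r * (c * u * b)) \<and> regular (c * u * b)"

end

theory Submission
  imports Defs
begin

lemma inv_props:
  assumes "ring_involution S"
  shows "S (x*y) = S y * S x" "S (S x) = x"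
  using assms unfolding ring_involution_def by auto

lemma dir1:
  assumes inv: "ring_involution S" and e1: "a*x*a = a" and e2: "S (x*a) = x*a" and e3: "x^2*a = x"
  shows "strongly_left_bc_invertible (a^2) (S a) a \<and> strongly_left_bc_invertible (a^2) (S a) 1
         \<and> strongly_left_bc_invertible a (S a) a"
proof -
  have A: "\<And>y. a*(x*(a*y)) = a*y" using e1 by (metis mult.assoc)
  have B: "\<And>y. x*(x*(a*y)) = x*y" using e3 by (metis mult.assoc power2_eq_square)
  have C: "\<And>y. S a*(S x*y) = x*(a*y)" using e2 inv_props[OF inv] by (metis mult.assoc)
  have D: "S a = x*(a*S a)"
  proof -
    have "S a = S (a*(x*a))" using e1 by (simp add: mult.assoc)
    also have "\<dots> = x*(a*S a)" using e2 inv_props[OF inv] by (simp add: mult.assoc)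
    finally show ?thesis .
  qed
  have D2: "x*(x*(a*(a*S a))) = S a" using B D by simp
  have R1: "regular (a*a*S a)"
    unfolding regular_def
    apply (rule exI[of _ "S x * x * x"])
    by (simp add: mult.assoc A B C)
  have s3: "strongly_left_bc_invertible (a^2) (S a) 1"
    unfolding strongly_left_bc_invertible_def
    using R1 D2 by (auto simp: power2_eq_square mult.assoc intro!: exI[of _ "x*x"])
  have s4: "strongly_left_bc_invertible a (S a) a"
    unfolding strongly_left_bc_invertible_def
    using R1 D2 by (auto simp: mult.assoc intro!: exI[of _ "x*x"])
  have R2: "regular (a*(a*a)*S a)"
    unfolding regular_def
    apply (rule exI[of _ "S x * x * x * x"])
    by (simp add: mult.assoc A B C)
  have D3: "x*(x*(x*(a*(a*(a*S a))))) = S a" using B D by simp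
  have s2: "strongly_left_bc_invertible (a^2) (S a) a"
    unfolding strongly_left_bc_invertible_def
    using R2 D3 by (auto simp: power2_eq_square mult.assoc intro!: exI[of _ "x*x*x"])
  show ?thesis using s2 s3 s4 by simp
qed

lemma hermitian_idem:
  assumes inv: "ring_involution S" and wa: "w * S a = S a" and ww: "w * S w = S w"
  shows "S w = w"
proof -
  have "w = S (w * S w)" using ww inv_props[OF inv] by simp
  also have "\<dots> = w * S w" using inv_props[OF inv] by simp
  also have "\<dots> = S w" using ww .
  finally show ?thesis by simp
qed

lemma dir3:
  assumes inv: "ring_involution S" and r: "S a = r*(a*a*S a)" and z: "(a*a*S a)*z*(a*a*S a) = a*a*S a"
  shows "left_dual_core_invertible S a"
proof -
  have K: "S a * (z * (a*(a*S a))) = S a"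
  proof -
    have "S a * (z * (a*(a*S a))) = (r*(a*a*S a)) * (z * (a*(a*S a)))" by (rule arg_cong[where f="\<lambda>t. t * (z * (a*(a*S a)))", OF r])
    also have "\<dots> = r*((a*a*S a)*z*(a*a*S a))" by (simp add: mult.assoc)
    also have "\<dots> = S a" by (simp only: z, rule r[symmetric])
    finally show ?thesis .
  qed
  have KK: "\<And>y. S a * (z * (a*(a*(S a * y)))) = S a * y"
  proof -
    fix y have "S a * (z * (a*(a*(S a * y)))) = (S a * (z * (a*(a*S a)))) * y" by (simp add: mult.assoc)
    then show "S a * (z * (a*(a*(S a * y)))) = S a * y" using K by simp
  qed
  define w where "w = S a * (z * (a * a))"
  have Sw: "S w = S a * S a * S z * a" unfolding w_def using inv_props[OF inv] by (simp add: mult.assoc)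
  have wa: "w * S a = S a" unfolding w_def using K by (simp add: mult.assoc)
  have ww: "w * S w = S w" by (simp only: Sw) (simp add: w_def mult.assoc KK)
  have h: "S w = w" using hermitian_idem[OF inv wa ww] .
  have aw: "a * w = a"
  proof -
    have "a = S (w * S a)" using wa inv_props[OF inv] by simp
    also have "\<dots> = a * S w" using inv_props[OF inv] by simp
    finally show ?thesis using h by simp
  qed
  show ?thesis unfolding left_dual_core_invertible_def
  proof (intro exI[of _ "S a * z * a"] conjI)
    have xa: "S a * z * a * a = w" unfolding w_def by (simp add: mult.assoc)
    show "a * (S a * z * a) * a = a" using xa aw by (simp add: mult.assoc)
    show "S (S a * z * a * a) = S a * z * a * a" using xa h by simp
    show "(S a * z * a)^2 * a = S a * z * a"
    proof -
      have "(S a * z * a)^2 * a = S a * z * (a * w)" using xa by (simp add: power2_eq_square mult.assoc)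
      thus ?thesis using aw by (simp add: mult.assoc)
    qed
  qed
qed

lemma dir2:
  assumes inv: "ring_involution S" and r: "S a = r*(a*(a*a)*S a)" and z: "(a*(a*a)*S a)*z*(a*(a*a)*S a) = a*(a*a)*S a"
  shows "left_dual_core_invertible S a"
proof -
  have K: "S a * (z * (a*(a*(a*S a)))) = S a"
  proof -
    have "S a * (z * (a*(a*(a*S a)))) = (r*(a*(a*a)*S a)) * (z * (a*(a*(a*S a))))" by (rule arg_cong[where f="\<lambda>t. t * (z * (a*(a*(a*S a))))", OF r])
    also have "\<dots> = r*((a*(a*a)*S a)*z*(a*(a*a)*S a))" by (simp add: mult.assoc)
    also have "\<dots> = S a" by (simp only: z, rule r[symmetric])
    finally show ?thesis .
  qed
  have KK: "\<And>y. S a * (z * (a*(a*(a*(S a * y))))) = S a * y"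
  proof -
    fix y have "S a * (z * (a*(a*(a*(S a * y))))) = (S a * (z * (a*(a*(a*S a))))) * y" by (simp add: mult.assoc)
    then show "S a * (z * (a*(a*(a*(S a * y))))) = S a * y" using K by simp
  qed
  define w where "w = S a * (z * (a * (a * a)))"
  have Sw: "S w = S a * S a * S a * S z * a" unfolding w_def using inv_props[OF inv] by (simp add: mult.assoc)
  have wa: "w * S a = S a" unfolding w_def using K by (simp add: mult.assoc)
  have ww: "w * S w = S w" by (simp only: Sw) (simp add: w_def mult.assoc KK)
  have h: "S w = w" using hermitian_idem[OF inv wa ww] .
  have aw: "a * w = a"
  proof -
    have "a = S (w * S a)" using wa inv_props[OF inv] by simp
    also have "\<dots> = a * S w" using inv_props[OF inv] by simp
    finally show ?thesis using h by simp
  qed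
  show ?thesis unfolding left_dual_core_invertible_def
  proof (intro exI[of _ "S a * z * a * a"] conjI)
    have xa: "S a * z * a * a * a = w" unfolding w_def by (simp add: mult.assoc)
    show "a * (S a * z * a * a) * a = a" using xa aw by (simp add: mult.assoc)
    show "S (S a * z * a * a * a) = S a * z * a * a * a" using xa h by simp
    show "(S a * z * a * a)^2 * a = S a * z * a * a"
    proof -
      have "(S a * z * a * a)^2 * a = S a * z * a * (a * w)" using xa by (simp add: power2_eq_square mult.assoc)
      thus ?thesis using aw by (simp add: mult.assoc)
    qed
  qed
qed

theorem corollary3p13:
  fixes star :: "'a::ring_1 \<Rightarrow> 'a" and a :: 'a
  assumes "ring_involution star"
  shows "(left_dual_core_invertible star a \<longleftrightarrow> strongly_left_bc_invertible (a ^ 2) (star a) a)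
       \<and> (left_dual_core_invertible star a \<longleftrightarrow> strongly_left_bc_invertible (a ^ 2) (star a) 1)
       \<and> (left_dual_core_invertible star a \<longleftrightarrow> strongly_left_bc_invertible a (star a) a)"
proof -
  have f1: "left_dual_core_invertible star a \<Longrightarrow> strongly_left_bc_invertible (a^2) (star a) a \<and> strongly_left_bc_invertible (a^2) (star a) 1
         \<and> strongly_left_bc_invertible a (star a) a"
    unfolding left_dual_core_invertible_def using dir1[OF assms] by blast
  have f2: "strongly_left_bc_invertible (a^2) (star a) a \<Longrightarrow> left_dual_core_invertible star a"
    unfolding strongly_left_bc_invertible_def regular_def power2_eq_square
    using dir2[OF assms] by blast
  have eq: "strongly_left_bc_invertible (a^2) (star a) 1 = strongly_left_bc_invertible a (star a) a"
    unfolding strongly_left_bc_invertible_def by (simp add: power2_eq_square)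
  have f4: "strongly_left_bc_invertible a (star a) a \<Longrightarrow> left_dual_core_invertible star a"
    unfolding strongly_left_bc_invertible_def regular_def
    using dir3[OF assms] by blast
  show ?thesis using f1 f2 eq f4 by blast
qed

end
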